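(* For $M,N\in\Lambda$, if $M\to_{\mathsf v}N$ then $\mathcal A(M)=\mathcal A(N)$.
   Context: $\lambda$-terms and values are $M,N::=V\mid MN$, $V::=x\mid\lambda x.M$, up to $\alpha$-conversion. Rules: $(\beta_v)$ $(\lambda x.M)V\to M\{x:=V\}$ if $V$ is a value; $(\sigma_1)$ $(\lambda x.M)NP\to(\lambda x.MP)N$ if $x\notin\mathrm{FV}(P)$; $(\sigma_3)$ $V((\lambda x.M)N)\to(\lambda x.VM)N$ if $V$ is a value and $x\notin\mathrm{FV}(V)$. $\to_{\mathsf v}$ is the contextual closure of their union and $\twoheadrightarrow_{\mathsf v}$ its reflexive-transitive closure. $\Lambda_\bot$ is the set of $\lambda$-terms possibly containing a constant $\bot$; $\sqsubseteq$ is the smallest context-closed preorder on $\Lambda_\bot$ with $\bot\sqsubseteq x$ and $\bot\sqsubseteq\lambda x.M$. Approximants $\mathcal A$ ($k\ge0$): $A::=B\mid C$; $B::=x\mid\lambda x.A\mid\bot\mid xBA_1\cdots A_k$; $C::=(\lambda x.A)(yBA_1\cdots A_k)$. $\mathcal A(M)=\{A\in\mathcal A\mid\exists N'\in\Lambda,\ M\twoheadrightarrow_{\mathsf v}N',\ A\sqsubseteq N'\}$. *)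

theory Defs
  imports Main
begin

text \<open>Lambda terms (possibly containing the constant bottom) in de Bruijn
  representation; de Bruijn indices implement terms up to alpha-conversion.\<close>

datatype trm = Var nat | Lam trm | App trm trm | Bot

fun bot_free :: "trm \<Rightarrow> bool" where
  "bot_free (Var i) = True"
| "bot_free (Lam M) = bot_free M"
| "bot_free (App M N) = (bot_free M \<and> bot_free N)"
| "bot_free Bot = False"

fun is_value :: "trm \<Rightarrow> bool" where
  "is_value (Var i) = True"
| "is_value (Lam M) = True"
| "is_value (App M N) = False"
| "is_value Bot = False"

fun lift :: "nat \<Rightarrow> trm \<Rightarrow> trm" where
  "lift k (Var i) = (if i < k then Var i else Var (Suc i))"
| "lift k (Lam M) = Lam (lift (Suc k) M)"
| "lift k (App M N) = App (lift k M) (lift k N)"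
| "lift k Bot = Bot"

fun subst :: "trm \<Rightarrow> nat \<Rightarrow> trm \<Rightarrow> trm" where
  "subst (Var i) k s = (if i < k then Var i else if i = k then s else Var (i - 1))"
| "subst (Lam M) k s = Lam (subst M (Suc k) (lift 0 s))"
| "subst (App M N) k s = App (subst M k s) (subst N k s)"
| "subst Bot k s = Bot"

text \<open>One-step reduction: contextual closure of beta_v, sigma_1, sigma_3.
  The side conditions on free variables are built into the de Bruijn
  lifting of the moved subterm.\<close>

inductive red :: "trm \<Rightarrow> trm \<Rightarrow> bool" where
  beta_v: "is_value V \<Longrightarrow> red (App (Lam M) V) (subst M 0 V)"
| sigma1: "red (App (App (Lam M) N) P) (App (Lam (App M (lift 0 P))) N)"
| sigma3: "is_value V \<Longrightarrow> red (App V (App (Lam M) N)) (App (Lam (App (lift 0 V) M)) N)"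
| ctx_lam: "red M M' \<Longrightarrow> red (Lam M) (Lam M')"
| ctx_appL: "red M M' \<Longrightarrow> red (App M N) (App M' N)"
| ctx_appR: "red N N' \<Longrightarrow> red (App M N) (App M N')"

abbreviation reds :: "trm \<Rightarrow> trm \<Rightarrow> bool" where
  "reds \<equiv> red\<^sup>*\<^sup>*"

inductive approx_le :: "trm \<Rightarrow> trm \<Rightarrow> bool" where
  le_refl: "approx_le M M"
| le_trans: "approx_le M N \<Longrightarrow> approx_le N P \<Longrightarrow> approx_le M P"
| le_bot_var: "approx_le Bot (Var x)"
| le_bot_lam: "approx_le Bot (Lam M)"
| le_lam: "approx_le M M' \<Longrightarrow> approx_le (Lam M) (Lam M')"
| le_app: "approx_le M M' \<Longrightarrow> approx_le N N' \<Longrightarrow> approx_le (App M N) (App M' N')"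

text \<open>Approximants: A ::= B | C;  B ::= x | \<lambda>x.A | Bot | x B A1...Ak;
  C ::= (\<lambda>x.A)(y B A1...Ak).  Spines are left-nested applications.\<close>

inductive apxA :: "trm \<Rightarrow> bool" and apxB :: "trm \<Rightarrow> bool" where
  B_var: "apxB (Var x)"
| B_lam: "apxA A \<Longrightarrow> apxB (Lam A)"
| B_bot: "apxB Bot"
| B_app: "apxB B \<Longrightarrow> list_all apxA As \<Longrightarrow> apxB (foldl App (App (Var x) B) As)"
| A_B: "apxB B \<Longrightarrow> apxA B"
| A_C: "apxA A \<Longrightarrow> apxB B \<Longrightarrow> list_all apxA As \<Longrightarrow>
          apxA (App (Lam A) (foldl App (App (Var y) B) As))"

definition approximants :: "trm \<Rightarrow> trm set" where
  "approximants M = {A. apxA A \<and> (\<exists>N'. bot_free N' \<and> reds M N' \<and> approx_le A N')}"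

end

theory Submission
  imports Defs
begin


lemma lift_lift:
  "i < k + 1 \<Longrightarrow> lift (Suc k) (lift i t) = lift i (lift k t)"
  by (induct t arbitrary: i k) auto

lemma lift_subst [simp]:
  "j < i + 1 \<Longrightarrow> lift i (subst t j s) = subst (lift (i + 1) t) j (lift i s)"
  by (induct t arbitrary: i j s) (simp_all add: diff_Suc split: nat.split, auto simp: lift_lift)

lemma lift_subst_lt:
  "i < j + 1 \<Longrightarrow> lift i (subst t j s) = subst (lift i t) (j + 1) (lift i s)"
  by (induct t arbitrary: i j s) (simp_all add: lift_lift, auto)

lemma subst_lift [simp]: "subst (lift k t) k s = t"
  by (induct t arbitrary: k s) simp_all

lemma subst_subst:
  "i < j + 1 \<Longrightarrow> subst (subst t (Suc j) (lift i v)) i (subst u j v) = subst (subst t i u) j v"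
  by (induct t arbitrary: i j u v)
    (simp_all add: diff_Suc subst_lift lift_subst_lt split: nat.split, auto simp: lift_lift[symmetric] lift_subst_lt)



inductive sig :: "trm \<Rightarrow> trm \<Rightarrow> bool" where
  s1: "sig (App (App (Lam M) N) P) (App (Lam (App M (lift 0 P))) N)"
| s3: "is_value V \<Longrightarrow> sig (App V (App (Lam M) N)) (App (Lam (App (lift 0 V) M)) N)"
| s_lam: "sig M M' \<Longrightarrow> sig (Lam M) (Lam M')"
| s_appL: "sig M M' \<Longrightarrow> sig (App M N) (App M' N)"
| s_appR: "sig N N' \<Longrightarrow> sig (App M N) (App M N')"

inductive bv :: "trm \<Rightarrow> trm \<Rightarrow> bool" where
  b_beta: "is_value V \<Longrightarrow> bv (App (Lam M) V) (subst M 0 V)"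
| b_lam: "bv M M' \<Longrightarrow> bv (Lam M) (Lam M')"
| b_appL: "bv M M' \<Longrightarrow> bv (App M N) (App M' N)"
| b_appR: "bv N N' \<Longrightarrow> bv (App M N) (App M N')"

lemma red_iff: "red M N \<longleftrightarrow> sig M N \<or> bv M N"
proof
  show "red M N \<Longrightarrow> sig M N \<or> bv M N"
    by (induct rule: red.induct) (auto intro: sig.intros bv.intros)
next
  have "sig M N \<Longrightarrow> red M N" by (induct rule: sig.induct) (auto intro: red.intros)
  moreover have "bv M N \<Longrightarrow> red M N" by (induct rule: bv.induct) (auto intro: red.intros)
  ultimately show "sig M N \<or> bv M N \<Longrightarrow> red M N" by blast
qed

lemma value_lift [simp]: "is_value (lift k V) = is_value V"
  by (cases V) auto

lemma value_subst: "is_value V \<Longrightarrow> is_value s \<Longrightarrow> is_value (subst V k s)"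
  by (cases V) auto

lemma sig_lift: "sig M M' \<Longrightarrow> sig (lift k M) (lift k M')"
proof (induct arbitrary: k rule: sig.induct)
  case (s1 M N P) then show ?case
    using sig.s1[of "lift (Suc k) M" "lift k N" "lift k P"] by (simp add: lift_lift)
next
  case (s3 V M N) then show ?case
    using sig.s3[of "lift k V" "lift (Suc k) M" "lift k N"] by (simp add: lift_lift)
qed (auto intro: sig.intros)

lemma bv_lift: "bv M M' \<Longrightarrow> bv (lift k M) (lift k M')"
proof (induct arbitrary: k rule: bv.induct)
  case (b_beta V M) then show ?case
    using bv.b_beta[of "lift k V" "lift (Suc k) M"] by simp
qed (auto intro: bv.intros)

lemma sig_subst: "sig M M' \<Longrightarrow> is_value s \<Longrightarrow> sig (subst M k s) (subst M' k s)"
proof (induct arbitrary: k s rule: sig.induct)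
  case (s1 M N P) then show ?case
    using sig.s1[of "subst M (Suc k) (lift 0 s)" "subst N k s" "subst P k s"] by (simp add: lift_subst_lt)
next
  case (s3 V M N) then show ?case
    using sig.s3[of "subst V k s" "subst M (Suc k) (lift 0 s)" "subst N k s"] by (simp add: lift_subst_lt value_subst)
qed (auto intro: sig.intros)

lemma bv_subst: "bv M M' \<Longrightarrow> is_value s \<Longrightarrow> bv (subst M k s) (subst M' k s)"
proof (induct arbitrary: k s rule: bv.induct)
  case (b_beta V M) then show ?case
    using bv.b_beta[of "subst V k s" "subst M (Suc k) (lift 0 s)"] by (simp add: value_subst subst_subst[symmetric])
qed (auto intro: bv.intros)



abbreviation sigs where "sigs \<equiv> sig\<^sup>*\<^sup>*"

lemma sigs_lam: "sigs M M' \<Longrightarrow> sigs (Lam M) (Lam M')"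
  by (induct rule: rtranclp_induct) (auto intro: rtranclp.rtrancl_into_rtrancl sig.intros)
lemma sigs_appL: "sigs M M' \<Longrightarrow> sigs (App M N) (App M' N)"
  by (induct rule: rtranclp_induct) (auto intro: rtranclp.rtrancl_into_rtrancl sig.intros)
lemma sigs_appR: "sigs N N' \<Longrightarrow> sigs (App M N) (App M N')"
  by (induct rule: rtranclp_induct) (auto intro: rtranclp.rtrancl_into_rtrancl sig.intros)

lemma sig_value: "sig V V' \<Longrightarrow> is_value V \<Longrightarrow> is_value V'"
  by (induct rule: sig.induct) auto

fun w :: "trm \<Rightarrow> nat" where
  "w (Var i) = 2"
| "w Bot = 2"
| "w (Lam M) = w M + 1"
| "w (App M N) = w M * w N"

lemma w_ge: "w t \<ge> 2"
proof (induct t)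
  case (App t1 t2)
  then have "2 * 1 \<le> w t1 * w t2" by (intro mult_mono) auto
  then show ?case by simp
qed auto

lemma w_lift [simp]: "w (lift k t) = w t"
  by (induct t arbitrary: k) auto

lemma sig_w: "sig M N \<Longrightarrow> w N < w M"
proof (induct rule: sig.induct)
  case (s1 M N P)
  have "w M * w P + 1 < (w M + 1) * w P" using w_ge[of P] by (simp add: algebra_simps)
  then have "(w M * w P + 1) * w N < (w M + 1) * w P * w N"
    using w_ge[of N] by (intro mult_strict_right_mono) auto
  then show ?case by (simp add: algebra_simps)
next
  case (s3 V M N)
  have "w V * w M + 1 < w V * (w M + 1)" using w_ge[of V] by (simp add: algebra_simps)
  then have "(w V * w M + 1) * w N < w V * (w M + 1) * w N"
    using w_ge[of N] by (intro mult_strict_right_mono) auto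
  then show ?case by (simp add: algebra_simps)
next
  case (s_appL M M' N) then show ?case using w_ge[of N] by simp
next
  case (s_appR N N' M) then show ?case using w_ge[of M] by simp
qed auto

definition joinable :: "(trm \<Rightarrow> trm \<Rightarrow> bool) \<Rightarrow> trm \<Rightarrow> trm \<Rightarrow> bool" where
  "joinable R b c \<longleftrightarrow> (\<exists>d. R\<^sup>*\<^sup>* b d \<and> R\<^sup>*\<^sup>* c d)"

lemma joinable_sym: "joinable R b c \<Longrightarrow> joinable R c b"
  unfolding joinable_def by blast

lemma lc1:
  assumes "sig (App (App (Lam M) N) P) c"
  shows "joinable sig (App (Lam (App M (lift 0 P))) N) c"
  using assms
proof cases
  case s1 then show ?thesis unfolding joinable_def by auto
next
  case (s_appL X)
  note cX = s_appL
  from s_appL(2) show ?thesis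
  proof cases
    case (s3 K L)
    let ?d = "App (Lam (App (lift 0 (Lam (App M (lift 0 P)))) K)) L"
    have "sig (App (Lam (App M (lift 0 P))) N) ?d" using s3 sig.s3[of "Lam (App M (lift 0 P))" K L] by simp
    moreover have "sig c (App (Lam (App (App (lift 0 (Lam M)) K) (lift 0 P))) L)"
      using s_appL s3 by (auto intro: sig.intros)
    moreover have "sig (App (Lam (App (App (lift 0 (Lam M)) K) (lift 0 P))) L) ?d"
      using sig.s1[of "lift 1 M" K "lift 0 P"]
      by (auto intro!: sig.intros simp: lift_lift)
    ultimately show ?thesis unfolding joinable_def by (meson r_into_rtranclp rtranclp.rtrancl_into_rtrancl)
  next
    case (s_appL M1)
    from s_appL(2) obtain M' where "M1 = Lam M'" "sig M M'" by cases auto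
    then show ?thesis using s_appL cX unfolding joinable_def
      by (intro exI[of _ "App (Lam (App M' (lift 0 P))) N"])
        (auto intro!: r_into_rtranclp intro: sig.intros)
  next
    case (s_appR N')
    then show ?thesis using s_appL unfolding joinable_def
      by (intro exI[of _ "App (Lam (App M (lift 0 P))) N'"])
        (auto intro!: r_into_rtranclp intro: sig.intros)
  qed
next
  case (s_appR P')
  then show ?thesis unfolding joinable_def
    by (intro exI[of _ "App (Lam (App M (lift 0 P'))) N"])
      (auto intro!: r_into_rtranclp intro: sig.intros sig_lift)
qed auto

lemma lc3:
  assumes "sig (App V (App (Lam M) N)) c" "is_value V"
  shows "joinable sig (App (Lam (App (lift 0 V) M)) N) c"
  using assms
proof cases
  case s3 then show ?thesis unfolding joinable_def by auto
next
  case (s_appL V')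
  then show ?thesis unfolding joinable_def using sig_value[OF s_appL(2) assms(2)]
    by (intro exI[of _ "App (Lam (App (lift 0 V') M)) N"])
      (auto intro!: r_into_rtranclp intro: sig.intros sig_lift)
next
  case (s_appR X)
  note cX = s_appR
  from s_appR(2) show ?thesis
  proof cases
    case (s3 K L)
    let ?d = "App (Lam (App (lift 0 (Lam (App (lift 0 V) M))) K)) L"
    have "sig (App (Lam (App (lift 0 V) M)) N) ?d" using s3 sig.s3[of "Lam (App (lift 0 V) M)" K L] by simp
    moreover have "sig c (App (Lam (App (lift 0 V) (App (lift 0 (Lam M)) K))) L)"
      using s_appR s3 assms(2) by (auto intro: sig.intros)
    moreover have "sig (App (Lam (App (lift 0 V) (App (lift 0 (Lam M)) K))) L) ?d"
      using sig.s3[of "lift 0 V" "lift 1 M" K] assms(2)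
      by (auto intro!: sig.intros simp: lift_lift)
    ultimately show ?thesis unfolding joinable_def by (meson r_into_rtranclp rtranclp.rtrancl_into_rtrancl)
  next
    case (s_appL M1)
    from s_appL(2) obtain M' where "M1 = Lam M'" "sig M M'" by cases auto
    then show ?thesis using s_appL s_appR cX assms(2) unfolding joinable_def
      by (intro exI[of _ "App (Lam (App (lift 0 V) M')) N"])
        (auto intro!: r_into_rtranclp intro: sig.intros)
  next
    case (s_appR N')
    then show ?thesis using s_appR cX assms(2) unfolding joinable_def
      by (intro exI[of _ "App (Lam (App (lift 0 V) M)) N'"])
        (auto intro!: r_into_rtranclp intro: sig.intros)
  qed
qed auto

lemma sig_lc: "sig a b \<Longrightarrow> sig a c \<Longrightarrow> joinable sig b c"
proof (induct arbitrary: c rule: sig.induct)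
  case (s1 M N P) then show ?case by (rule lc1)
next
  case (s3 V M N) then show ?case using lc3 by blast
next
  case (s_lam M M')
  note IH = s_lam(2) and H = s_lam(1)
  from s_lam(3) show ?case
  proof cases
    case (s_lam M'')
    then show ?thesis using IH[of M''] unfolding joinable_def by (auto intro: sigs_lam)
  qed
next
  case (s_appL M M' N)
  note IH = s_appL(2) and H = s_appL(1)
  from s_appL(3) show ?case
  proof cases
    case (s1 M1 N1)
    then show ?thesis using lc1[of M1 N1 N "App M' N"] H by (auto intro: joinable_sym sig.intros)
  next
    case (s3 M1 N1)
    then show ?thesis using lc3[of M M1 N1 "App M' N"] H by (auto intro: joinable_sym sig.intros)
  next
    case (s_appL M'')
    then show ?thesis using IH[of M''] unfolding joinable_def by (auto intro: sigs_appL)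
  next
    case (s_appR N')
    then show ?thesis using H unfolding joinable_def
      by (intro exI[of _ "App M' N'"]) (auto intro!: r_into_rtranclp intro: sig.intros)
  qed
next
  case (s_appR N N' M)
  note IH = s_appR(2) and H = s_appR(1)
  from s_appR(3) show ?case
  proof cases
    case (s1 M1 N1)
    then show ?thesis using lc1[of M1 N1 N "App M N'"] H by (auto intro: joinable_sym sig.intros)
  next
    case (s3 M1 N1)
    then show ?thesis using lc3[of M M1 N1 "App M N'"] H by (auto intro: joinable_sym sig.intros)
  next
    case (s_appR N'')
    then show ?thesis using IH[of N''] unfolding joinable_def by (auto intro: sigs_appR)
  next
    case (s_appL M')
    then show ?thesis using H unfolding joinable_def
      by (intro exI[of _ "App M' N'"]) (auto intro!: r_into_rtranclp intro: sig.intros)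
  qed
qed

lemma sig_confl: "sigs a b \<Longrightarrow> sigs a c \<Longrightarrow> joinable sig b c"
proof (induct "w a" arbitrary: a b c rule: less_induct)
  case less
  show ?case
  proof (cases "a = b \<or> a = c")
    case True then show ?thesis using less(2,3) unfolding joinable_def by auto
  next
    case False
    then obtain b1 c1 where b1: "sig a b1" "sigs b1 b" and c1: "sig a c1" "sigs c1 c"
      using less(2,3) by (metis converse_rtranclpE)
    obtain d where d: "sigs b1 d" "sigs c1 d" using sig_lc[OF b1(1) c1(1)] unfolding joinable_def by blast
    obtain e where e: "sigs b e" "sigs d e"
      using less(1)[OF sig_w[OF b1(1)] b1(2) d(1)] unfolding joinable_def by blast
    have "sigs c1 e" using d(2) e(2) by auto
    then obtain f where f: "sigs c f" "sigs e f"
      using less(1)[OF sig_w[OF c1(1)] c1(2)] unfolding joinable_def by blast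
    show ?thesis unfolding joinable_def using e f by (meson rtranclp_trans)
  qed
qed



lemma hind:
  assumes H: "\<And>a b c. R a b \<Longrightarrow> S a c \<Longrightarrow> \<exists>d. S\<^sup>=\<^sup>= b d \<and> R\<^sup>*\<^sup>* c d"
  shows "R\<^sup>*\<^sup>* a b \<Longrightarrow> S\<^sup>*\<^sup>* a c \<Longrightarrow> \<exists>d. S\<^sup>*\<^sup>* b d \<and> R\<^sup>*\<^sup>* c d"
proof -
  have step1: "\<exists>d. S\<^sup>=\<^sup>= b d \<and> R\<^sup>*\<^sup>* c d" if "R\<^sup>*\<^sup>* a b" "S a c" for a b c
    using that
  proof (induct arbitrary: c rule: converse_rtranclp_induct)
    case base then show ?case by auto
  next
    case (step a a1)
    obtain d1 where d1: "S\<^sup>=\<^sup>= a1 d1" "R\<^sup>*\<^sup>* c d1" using H[OF step(1) step(4)] by blast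
    show ?case
    proof (cases "a1 = d1")
      case True
      have "R\<^sup>*\<^sup>* c b" using d1(2) step(2) True by (simp add: rtranclp_trans)
      then show ?thesis by blast
    next
      case False
      then have "S a1 d1" using d1 by auto
      then obtain d where "S\<^sup>=\<^sup>= b d" "R\<^sup>*\<^sup>* d1 d" using step(3) by blast
      moreover have "R\<^sup>*\<^sup>* c d" using d1(2) \<open>R\<^sup>*\<^sup>* d1 d\<close> by (rule rtranclp_trans)
      ultimately show ?thesis by blast
    qed
  qed
  assume A: "R\<^sup>*\<^sup>* a b" "S\<^sup>*\<^sup>* a c"
  from A(2) show ?thesis
  proof (induct rule: rtranclp_induct)
    case base then show ?case using A(1) by auto
  next
    case (step c1 c)
    then obtain d1 where d1: "S\<^sup>*\<^sup>* b d1" "R\<^sup>*\<^sup>* c1 d1" by blast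
    obtain d where d: "S\<^sup>=\<^sup>= d1 d" "R\<^sup>*\<^sup>* c d" using step1[OF d1(2) step(2)] by blast
    from d(1) have "S\<^sup>*\<^sup>* d1 d" by auto
    then have "S\<^sup>*\<^sup>* b d" using d1(1) by (simp add: rtranclp_trans)
    then show ?case using d(2) by blast
  qed
qed

lemma diamond_confl:
  assumes H: "\<And>a b c. R a b \<Longrightarrow> R a c \<Longrightarrow> \<exists>d. R b d \<and> R c d"
  shows "R\<^sup>*\<^sup>* a b \<Longrightarrow> R\<^sup>*\<^sup>* a c \<Longrightarrow> \<exists>d. R\<^sup>*\<^sup>* b d \<and> R\<^sup>*\<^sup>* c d"
proof -
  have "\<exists>d. R\<^sup>=\<^sup>= b d \<and> R\<^sup>*\<^sup>* c d" if "R a b" "R a c" for a b c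
    using H[OF that] by blast
  then show "R\<^sup>*\<^sup>* a b \<Longrightarrow> R\<^sup>*\<^sup>* a c \<Longrightarrow> \<exists>d. R\<^sup>*\<^sup>* b d \<and> R\<^sup>*\<^sup>* c d"
    using hind[of R R] by blast
qed


inductive par :: "trm \<Rightarrow> trm \<Rightarrow> bool" where
  p_var: "par (Var i) (Var i)"
| p_bot: "par Bot Bot"
| p_lam: "par M M' \<Longrightarrow> par (Lam M) (Lam M')"
| p_app: "par M M' \<Longrightarrow> par N N' \<Longrightarrow> par (App M N) (App M' N')"
| p_beta: "par M M' \<Longrightarrow> par V V' \<Longrightarrow> is_value V \<Longrightarrow> par (App (Lam M) V) (subst M' 0 V')"

inductive_cases par_VarE: "par (Var i) t"
inductive_cases par_LamE: "par (Lam M) t"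
inductive_cases par_AppE: "par (App M N) t"
inductive_cases par_BotE: "par Bot t"

lemma par_refl [simp]: "par M M"
  by (induct M) (auto intro: par.intros)

lemma par_value: "par V V' \<Longrightarrow> is_value V \<Longrightarrow> is_value V'"
  by (induct rule: par.induct) auto

lemma par_lift: "par M M' \<Longrightarrow> par (lift k M) (lift k M')"
proof (induct arbitrary: k rule: par.induct)
  case (p_beta M M' V V') then show ?case
    using par.p_beta[of "lift (Suc k) M" "lift (Suc k) M'" "lift k V" "lift k V'"] by simp
qed (auto intro: par.intros)

lemma par_subst: "par M M' \<Longrightarrow> par N N' \<Longrightarrow> is_value N \<Longrightarrow> par (subst M k N) (subst M' k N')"
proof (induct arbitrary: k N N' rule: par.induct)
  case (p_lam M M')
  have "par (subst M (Suc k) (lift 0 N)) (subst M' (Suc k) (lift 0 N'))"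
    using p_lam(2)[OF par_lift[OF p_lam(3)]] p_lam(4) by simp
  then show ?case by (simp add: par.p_lam)
next
  case (p_beta M M' V V')
  have "par (App (Lam (subst M (Suc k) (lift 0 N))) (subst V k N))
     (subst (subst M' (Suc k) (lift 0 N')) 0 (subst V' k N'))"
    using p_beta(2)[OF par_lift[OF p_beta(6)]] p_beta(4)[OF p_beta(6)] p_beta(5,6,7)
    by (intro par.p_beta) (auto intro: value_subst)
  then show ?case by (simp add: subst_subst[of 0 k, symmetric])
qed (auto intro: par.intros)

abbreviation bvs where "bvs \<equiv> bv\<^sup>*\<^sup>*"

lemma bvs_lam: "bvs M M' \<Longrightarrow> bvs (Lam M) (Lam M')"
  by (induct rule: rtranclp_induct) (auto intro: rtranclp.rtrancl_into_rtrancl bv.intros)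
lemma bvs_appL: "bvs M M' \<Longrightarrow> bvs (App M N) (App M' N)"
  by (induct rule: rtranclp_induct) (auto intro: rtranclp.rtrancl_into_rtrancl bv.intros)
lemma bvs_appR: "bvs N N' \<Longrightarrow> bvs (App M N) (App M N')"
  by (induct rule: rtranclp_induct) (auto intro: rtranclp.rtrancl_into_rtrancl bv.intros)

lemma bv_par: "bv M N \<Longrightarrow> par M N"
  by (induct rule: bv.induct) (auto intro: par.intros)

lemma par_bvs: "par M N \<Longrightarrow> bvs M N"
proof (induct rule: par.induct)
  case (p_app M M' N N') then show ?case by (meson bvs_appL bvs_appR rtranclp_trans)
next
  case (p_beta M M' V V')
  have "bvs (App (Lam M) V) (App (Lam M') V')" using p_beta by (meson bvs_appL bvs_appR bvs_lam rtranclp_trans)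
  moreover have "bv (App (Lam M') V') (subst M' 0 V')" using p_beta par_value by (auto intro: bv.intros)
  ultimately show ?case by auto
qed (auto intro: bvs_lam)

lemma pars_bvs: "par\<^sup>*\<^sup>* M N \<Longrightarrow> bvs M N"
  by (induct rule: rtranclp_induct) (auto dest: par_bvs)

lemma bvs_pars: "bvs M N \<Longrightarrow> par\<^sup>*\<^sup>* M N"
  by (induct rule: rtranclp_induct) (auto dest: bv_par intro: rtranclp.rtrancl_into_rtrancl)


lemma par_diamond: "par a b \<Longrightarrow> par a c \<Longrightarrow> \<exists>d. par b d \<and> par c d"
proof (induct arbitrary: c rule: par.induct)
  case (p_var i)
  then have "c = Var i" by (auto elim: par_VarE)
  then show ?case by (intro exI[of _ "Var i"]) simp
next
  case p_bot
  then have "c = Bot" by (auto elim: par_BotE)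
  then show ?case by (intro exI[of _ Bot]) simp
next
  case (p_lam M M')
  from p_lam(3) obtain M'' where M'': "c = Lam M''" "par M M''" by (auto elim: par_LamE)
  obtain d where "par M' d" "par M'' d" using p_lam(2)[OF M''(2)] by blast
  then show ?case using M'' by (intro exI[of _ "Lam d"]) (simp add: par.p_lam)
next
  case (p_app M M' N N')
  from p_app(5) consider (A) M'' N'' where "c = App M'' N''" "par M M''" "par N N''"
    | (B) K K' V' where "M = Lam K" "c = subst K' 0 V'" "par K K'" "par N V'" "is_value N"
    by (auto elim: par_AppE)
  then show ?case
  proof cases
    case A
    note 1 = A
    obtain d1 where "par M' d1" "par M'' d1" using p_app(2) 1 by blast
    moreover obtain d2 where "par N' d2" "par N'' d2" using p_app(4) 1 by blast
    ultimately show ?thesis using 1 by (intro exI[of _ "App d1 d2"]) (simp add: par.p_app)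
  next
    case B
    note 2 = B
    from p_app(1) 2 obtain K1 where K1: "M' = Lam K1" "par K K1" by (auto elim: par_LamE)
    have "par (Lam K) (Lam K')" using 2 by (simp add: par.p_lam)
    then obtain e where e: "par M' e" "par (Lam K') e" using p_app(2) 2 by blast
    from e(2) obtain d1 where d1: "e = Lam d1" "par K' d1" by (auto elim: par_LamE)
    have "par K1 d1" using e(1) d1(1) K1(1) by (auto elim: par_LamE)
    obtain d2 where d2: "par N' d2" "par V' d2" using p_app(4) 2 by blast
    have vN': "is_value N'" using par_value p_app(3) 2 by blast
    have vV': "is_value V'" using par_value 2 by blast
    have "par (App M' N') (subst d1 0 d2)" using K1 \<open>par K1 d1\<close> d2 vN' by (simp add: par.p_beta)
    moreover have "par c (subst d1 0 d2)" using 2 d1 d2 vV' by (simp add: par_subst)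
    ultimately show ?thesis by blast
  qed
next
  case (p_beta M M' V V')
  have vV': "is_value V'" using par_value p_beta(3,5) by blast
  from p_beta(6) consider (A) M'' N'' where "c = App M'' N''" "par (Lam M) M''" "par V N''"
    | (B) K K' V'' where "Lam M = Lam K" "c = subst K' 0 V''" "par K K'" "par V V''" "is_value V"
    by (auto elim: par_AppE)
  then show ?case
  proof cases
    case A
    note 1 = A
    then obtain K where K: "M'' = Lam K" "par M K" by (auto elim: par_LamE)
    obtain d1 where d1: "par M' d1" "par K d1" using p_beta(2) K by blast
    obtain d2 where d2: "par V' d2" "par N'' d2" using p_beta(4) 1 by blast
    have vN: "is_value N''" using par_value p_beta(5) 1 by blast
    have "par (subst M' 0 V') (subst d1 0 d2)" using d1 d2 vV' by (simp add: par_subst)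
    moreover have "par c (subst d1 0 d2)" using 1 K d1 d2 vN by (simp add: par.p_beta)
    ultimately show ?thesis by blast
  next
    case B
    note 2 = B
    obtain d1 where d1: "par M' d1" "par K' d1" using p_beta(2) 2 by blast
    obtain d2 where d2: "par V' d2" "par V'' d2" using p_beta(4) 2 by blast
    have vV'': "is_value V''" using par_value 2 by blast
    have "par (subst M' 0 V') (subst d1 0 d2)" using d1 d2 vV' by (simp add: par_subst)
    moreover have "par c (subst d1 0 d2)" using 2 d1 d2 vV'' by (simp add: par_subst)
    ultimately show ?thesis by blast
  qed
qed

lemma bv_confl: "bvs a b \<Longrightarrow> bvs a c \<Longrightarrow> \<exists>d. bvs b d \<and> bvs c d"
proof -
  assume "bvs a b" "bvs a c"
  then have ab: "par\<^sup>*\<^sup>* a b" and ac: "par\<^sup>*\<^sup>* a c" by (auto intro: bvs_pars)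
  have "\<exists>d. par\<^sup>*\<^sup>* b d \<and> par\<^sup>*\<^sup>* c d"
    apply (rule diamond_confl[of par])
      apply (erule (1) par_diamond)
     apply (rule ab)
    apply (rule ac)
    done
  then show ?thesis by (blast intro: pars_bvs)
qed



lemma sig_subst_arg: "sig N N' \<Longrightarrow> sigs (subst M k N) (subst M k N')"
proof (induct M arbitrary: k N N')
  case (Lam M)
  have "sigs (subst M (Suc k) (lift 0 N)) (subst M (Suc k) (lift 0 N'))"
    using Lam(1)[OF sig_lift[OF Lam(2)]] .
  then show ?case by (simp add: sigs_lam)
next
  case (App M1 M2)
  have "sigs (App (subst M1 k N) (subst M2 k N)) (App (subst M1 k N') (subst M2 k N))"
    using App(1)[OF App(3)] by (rule sigs_appL)
  moreover have "sigs (App (subst M1 k N') (subst M2 k N)) (App (subst M1 k N') (subst M2 k N'))"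
    using App(2)[OF App(3)] by (rule sigs_appR)
  ultimately show ?case by simp
qed auto

lemma bv_value: "bv V V' \<Longrightarrow> is_value V \<Longrightarrow> is_value V'"
  by (induct rule: bv.induct) auto

lemma comm: "sig a b \<Longrightarrow> bv a c \<Longrightarrow> \<exists>d. bv\<^sup>=\<^sup>= b d \<and> sigs c d"
proof (induct arbitrary: c rule: sig.induct)
  case (s1 M N P)
  from s1 show ?case
  proof cases
    case (b_appL X)
    note cX = b_appL
    from b_appL(2) show ?thesis
    proof cases
      case b_beta
      have "bv (App (Lam (App M (lift 0 P))) N) (subst (App M (lift 0 P)) 0 N)"
        using b_beta by (intro bv.b_beta)
      then show ?thesis using b_beta cX by (intro exI[of _ c]) simp
    next
      case (b_appL M1)
      from b_appL(2) obtain M' where M': "M1 = Lam M'" "bv M M'" by (auto elim: bv.cases)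
      have "bv (App (Lam (App M (lift 0 P))) N) (App (Lam (App M' (lift 0 P))) N)"
        using M' by (auto intro: bv.intros)
      moreover have "sig c (App (Lam (App M' (lift 0 P))) N)"
        using b_appL M' cX by (auto intro: sig.intros)
      ultimately show ?thesis by blast
    next
      case (b_appR N')
      have "bv (App (Lam (App M (lift 0 P))) N) (App (Lam (App M (lift 0 P))) N')"
        using b_appR by (auto intro: bv.intros)
      moreover have "sig c (App (Lam (App M (lift 0 P))) N')"
        using b_appR cX by (auto intro: sig.intros)
      ultimately show ?thesis by blast
    qed
  next
    case (b_appR P')
    have "bv (App (Lam (App M (lift 0 P))) N) (App (Lam (App M (lift 0 P'))) N)"
      using b_appR by (auto intro: bv.intros bv_lift)
    moreover have "sig c (App (Lam (App M (lift 0 P'))) N)"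
      using b_appR by (auto intro: sig.intros)
    ultimately show ?thesis by blast
  qed
next
  case (s3 V M N)
  from s3(2) show ?case
  proof cases
    case (b_appL V')
    have "bv (App (Lam (App (lift 0 V) M)) N) (App (Lam (App (lift 0 V') M)) N)"
      using b_appL by (auto intro: bv.intros bv_lift)
    moreover have "sig c (App (Lam (App (lift 0 V') M)) N)"
      using b_appL s3(1) bv_value by (auto intro: sig.intros)
    ultimately show ?thesis by blast
  next
    case (b_appR X)
    note cX = b_appR
    from b_appR(2) show ?thesis
    proof cases
      case b_beta
      have "bv (App (Lam (App (lift 0 V) M)) N) (subst (App (lift 0 V) M) 0 N)"
        using b_beta by (intro bv.b_beta)
      then show ?thesis using b_beta cX by (intro exI[of _ c]) simp
    next
      case (b_appL M1)
      from b_appL(2) obtain M' where M': "M1 = Lam M'" "bv M M'" by (auto elim: bv.cases)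
      have "bv (App (Lam (App (lift 0 V) M)) N) (App (Lam (App (lift 0 V) M')) N)"
        using M' by (auto intro: bv.intros)
      moreover have "sig c (App (Lam (App (lift 0 V) M')) N)"
        using b_appL M' cX s3(1) by (auto intro: sig.intros)
      ultimately show ?thesis by blast
    next
      case (b_appR N')
      have "bv (App (Lam (App (lift 0 V) M)) N) (App (Lam (App (lift 0 V) M)) N')"
        using b_appR by (auto intro: bv.intros)
      moreover have "sig c (App (Lam (App (lift 0 V) M)) N')"
        using b_appR cX s3(1) by (auto intro: sig.intros)
      ultimately show ?thesis by blast
    qed
  qed (use s3(1) in auto)
next
  case (s_lam M M')
  note IH = s_lam(2)
  from s_lam(3) show ?case
  proof cases
    case (b_lam M'')
    then obtain d where "bv\<^sup>=\<^sup>= M' d" "sigs M'' d" using IH by blast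
    then show ?thesis using b_lam by (intro exI[of _ "Lam d"]) (auto intro: bv.intros sigs_lam)
  qed
next
  case (s_appL M M' N)
  note IH = s_appL(2) and H = s_appL(1)
  from s_appL(3) show ?case
  proof cases
    case (b_beta K)
    from H b_beta obtain K' where K': "M' = Lam K'" "sig K K'" by (auto elim: sig.cases)
    have "bv (App M' N) (subst K' 0 N)" using K' b_beta by (auto intro: bv.intros)
    moreover have "sig c (subst K' 0 N)" using K' b_beta by (auto intro: sig_subst)
    ultimately show ?thesis by blast
  next
    case (b_appL M'')
    then obtain d where "bv\<^sup>=\<^sup>= M' d" "sigs M'' d" using IH by blast
    then show ?thesis using b_appL by (intro exI[of _ "App d N"]) (auto intro: bv.intros sigs_appL)
  next
    case (b_appR N')
    have "bv (App M' N) (App M' N')" using b_appR by (auto intro: bv.intros)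
    moreover have "sig c (App M' N')" using b_appR H by (auto intro: sig.intros)
    ultimately show ?thesis by blast
  qed
next
  case (s_appR N N' M)
  note IH = s_appR(2) and H = s_appR(1)
  from s_appR(3) show ?case
  proof cases
    case (b_beta K)
    have vN': "is_value N'" using sig_value H b_beta by blast
    have "bv (App M N') (subst K 0 N')" using vN' b_beta by (auto intro: bv.intros)
    moreover have "sigs c (subst K 0 N')" using b_beta H by (auto intro: sig_subst_arg)
    ultimately show ?thesis by blast
  next
    case (b_appR N'')
    then obtain d where "bv\<^sup>=\<^sup>= N' d" "sigs N'' d" using IH by blast
    then show ?thesis using b_appR by (intro exI[of _ "App M d"]) (auto intro: bv.intros sigs_appR)
  next
    case (b_appL M')
    have "bv (App M N') (App M' N')" using b_appL by (auto intro: bv.intros)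
    moreover have "sig c (App M' N')" using b_appL H by (auto intro: sig.intros)
    ultimately show ?thesis by blast
  qed
qed



lemma sigs_reds: "sigs x y \<Longrightarrow> reds x y"
proof (induct rule: rtranclp_induct)
  case (step y z)
  have "red y z" using step(2) by (simp add: red_iff)
  then show ?case using step(3) by (rule rtranclp.rtrancl_into_rtrancl[rotated])
qed simp

lemma bvs_reds: "bvs x y \<Longrightarrow> reds x y"
proof (induct rule: rtranclp_induct)
  case (step y z)
  have "red y z" using step(2) by (simp add: red_iff)
  then show ?case using step(3) by (rule rtranclp.rtrancl_into_rtrancl[rotated])
qed simp

definition T :: "trm \<Rightarrow> trm \<Rightarrow> bool" where "T x y \<longleftrightarrow> sigs x y \<or> bvs x y"

lemma sig_bv_comm: "sigs a b \<Longrightarrow> bvs a c \<Longrightarrow> \<exists>d. bvs b d \<and> sigs c d"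
proof -
  assume ab: "sigs a b" and ac: "bvs a c"
  show ?thesis
    apply (rule hind[of sig bv])
      apply (erule (1) comm)
     apply (rule ab)
    apply (rule ac)
    done
qed

lemma T_diamond: "T a b \<Longrightarrow> T a c \<Longrightarrow> \<exists>d. T b d \<and> T c d"
proof -
  assume ab: "T a b" and ac: "T a c"
  show ?thesis
  proof (cases "sigs a b")
    case True
    show ?thesis
    proof (cases "sigs a c")
      case True
      then obtain d where "sigs b d" "sigs c d" using sig_confl[OF \<open>sigs a b\<close>] unfolding joinable_def by blast
      then show ?thesis unfolding T_def by blast
    next
      case False
      then have "bvs a c" using ac unfolding T_def by blast
      then obtain d where "bvs b d" "sigs c d" using sig_bv_comm[OF \<open>sigs a b\<close>] by blast
      then show ?thesis unfolding T_def by blast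
    qed
  next
    case False
    then have bab: "bvs a b" using ab unfolding T_def by blast
    show ?thesis
    proof (cases "sigs a c")
      case True
      then obtain d where "bvs c d" "sigs b d" using sig_bv_comm[OF True bab] by blast
      then show ?thesis unfolding T_def by blast
    next
      case False
      then have "bvs a c" using ac unfolding T_def by blast
      then obtain d where "bvs b d" "bvs c d" using bv_confl[OF bab] by blast
      then show ?thesis unfolding T_def by blast
    qed
  qed
qed

lemma reds_Ts: "reds x y \<Longrightarrow> T\<^sup>*\<^sup>* x y"
proof (induct rule: rtranclp_induct)
  case (step y z)
  have "T y z" using step(2) unfolding T_def red_iff by blast
  then show ?case using step(3) by (rule rtranclp.rtrancl_into_rtrancl[rotated])
qed simp

lemma Ts_reds: "T\<^sup>*\<^sup>* x y \<Longrightarrow> reds x y"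
proof (induct rule: rtranclp_induct)
  case (step y z)
  have "reds y z" using step(2) unfolding T_def using sigs_reds bvs_reds by blast
  then show ?case using step(3) by (rule rtranclp_trans[rotated])
qed simp

lemma red_confl: "reds a b \<Longrightarrow> reds a c \<Longrightarrow> \<exists>d. reds b d \<and> reds c d"
proof -
  assume "reds a b" "reds a c"
  then have ab: "T\<^sup>*\<^sup>* a b" and ac: "T\<^sup>*\<^sup>* a c" by (auto intro: reds_Ts)
  have "\<exists>d. T\<^sup>*\<^sup>* b d \<and> T\<^sup>*\<^sup>* c d"
    apply (rule diamond_confl[of T])
      apply (erule (1) T_diamond)
     apply (rule ab)
    apply (rule ac)
    done
  then show ?thesis using Ts_reds by blast
qed



fun le' :: "trm \<Rightarrow> trm \<Rightarrow> bool" where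
  "le' Bot t = (t = Bot \<or> is_value t)"
| "le' (Var i) t = (t = Var i)"
| "le' (Lam a) t = (case t of Lam b \<Rightarrow> le' a b | _ \<Rightarrow> False)"
| "le' (App a b) t = (case t of App c d \<Rightarrow> le' a c \<and> le' b d | _ \<Rightarrow> False)"

lemma le'_refl: "le' t t"
  by (induct t) auto

lemma le'_trans: "le' a b \<Longrightarrow> le' b c \<Longrightarrow> le' a c"
proof (induct a arbitrary: b c)
  case (Var x) then show ?case by auto
next
  case (Lam a) then show ?case by (cases b; cases c) auto
next
  case (App a1 a2) then show ?case by (cases b; cases c) auto
next
  case Bot then show ?case by (cases b; cases c) auto
qed

lemma approx_le'_1: "approx_le s t \<Longrightarrow> le' s t"
  by (induct rule: approx_le.induct) (auto intro: le'_refl le'_trans)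

lemma approx_le'_2: "le' s t \<Longrightarrow> approx_le s t"
proof (induct s arbitrary: t)
  case (Var x) then show ?case by (auto intro: approx_le.intros)
next
  case (Lam a) then show ?case by (cases t) (auto intro: approx_le.intros)
next
  case (App a1 a2) then show ?case by (cases t) (auto intro: approx_le.intros)
next
  case Bot then show ?case by (cases t) (auto intro: approx_le.intros)
qed

lemma approx_le_iff: "approx_le s t \<longleftrightarrow> le' s t"
  using approx_le'_1 approx_le'_2 by blast

inductive sH :: "trm \<Rightarrow> bool" and sB :: "trm \<Rightarrow> bool" and sA :: "trm \<Rightarrow> bool" where
  H1: "sB B \<Longrightarrow> sH (App (Var x) B)"
| H2: "sH h \<Longrightarrow> sA A \<Longrightarrow> sH (App h A)"
| Bv: "sB (Var x)"
| Bl: "sA A \<Longrightarrow> sB (Lam A)"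
| Bb: "sB Bot"
| Bh: "sH h \<Longrightarrow> sB h"
| Aa: "sB B \<Longrightarrow> sA B"
| Ac: "sA A \<Longrightarrow> sH h \<Longrightarrow> sA (App (Lam A) h)"

lemma sH_foldl: "sH h \<Longrightarrow> list_all sA As \<Longrightarrow> sH (foldl App h As)"
  by (induct As arbitrary: h) (auto intro: sH_sB_sA.intros)

lemma apx_s: "(apxA A \<longrightarrow> sA A) \<and> (apxB B \<longrightarrow> sB B)"
proof -
  have "(apxA A \<Longrightarrow> sA A)" and "(apxB B \<Longrightarrow> sB B)"
  proof (induct rule: apxA_apxB.inducts)
    case (B_app B As x)
    have "list_all sA As" using B_app(3) by (simp add: list.pred_mono_strong)
    then show ?case using B_app(2) by (auto intro!: sH_foldl Bh H1)
  next
    case (A_C A B As y)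
    have "list_all sA As" using A_C(5) by (simp add: list.pred_mono_strong)
    then show ?case using A_C(2,4) by (auto intro!: sH_foldl Ac H1)
  qed (auto intro: sH_sB_sA.intros)
  then show ?thesis by blast
qed



fun isH :: "trm \<Rightarrow> bool" where
  "isH (Var i) = True"
| "isH (App a b) = isH a"
| "isH (Lam a) = False"
| "isH Bot = False"

inductive_cases sH_AppE: "sH (App a b)"
inductive_cases sH_VarE: "sH (Var a)"
inductive_cases sH_LamE: "sH (Lam a)"
inductive_cases sH_BotE: "sH Bot"
inductive_cases sA_AppE: "sA (App a b)"
inductive_cases sB_AppE: "sB (App a b)"
inductive_cases sA_LamE: "sA (Lam a)"
inductive_cases sB_LamE: "sB (Lam a)"

lemma sH_le: "sH h \<Longrightarrow> le' h N \<Longrightarrow> isH N \<and> (\<exists>c d. N = App c d)"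
proof (induct h arbitrary: N)
  case (App a b)
  from App(4) obtain c d where N: "N = App c d" "le' a c" "le' b d" by (cases N) auto
  from App(3) have "(\<exists>x. a = Var x) \<or> sH a" by (rule sH_AppE) auto
  then show ?case
  proof
    assume "\<exists>x. a = Var x" then show ?thesis using N by auto
  next
    assume "sH a" then show ?thesis using App(1) N by auto
  qed
next
  case (Var x) then show ?case by (blast elim: sH_VarE)
next
  case (Lam x) then show ?case by (blast elim: sH_LamE)
next
  case Bot then show ?case by (blast elim: sH_BotE)
qed

lemma sA_App: "sA (App a b) \<Longrightarrow> ((\<exists>x. a = Var x) \<and> sB b) \<or> (sH a \<and> sA b) \<or> (\<exists>A. a = Lam A \<and> sA A \<and> sH b)"
proof -
  assume "sA (App a b)"
  then have "sH (App a b) \<or> (\<exists>A. a = Lam A \<and> sA A \<and> sH b)"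
  proof (rule sA_AppE)
    assume "sB (App a b)" then show ?thesis by (rule sB_AppE) blast
  qed blast
  then show ?thesis
  proof
    assume "sH (App a b)" then show ?thesis by (rule sH_AppE) blast+
  qed blast
qed

lemma sB_cases: "sB b \<Longrightarrow> (\<exists>x. b = Var x) \<or> (\<exists>A. b = Lam A \<and> sA A) \<or> b = Bot \<or> sH b"
  by (erule sB.cases) blast+

lemma sA_App_sub: "sA (App a b) \<Longrightarrow> sA a \<and> sA b"
proof -
  assume "sA (App a b)"
  from sA_App[OF this] show ?thesis
  proof (elim disjE exE conjE)
    fix x assume "a = Var x" "sB b" then show ?thesis by (blast intro: Aa Bv)
  next
    assume "sH a" "sA b" then show ?thesis by (blast intro: Aa Bh)
  next
    fix A assume "a = Lam A" "sA A" "sH b" then show ?thesis by (blast intro: Aa Bh Bl)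
  qed
qed

lemma sA_Lam: "sA (Lam a) \<Longrightarrow> sA a"
proof -
  assume "sA (Lam a)"
  then show "sA a"
  proof (rule sA_LamE)
    assume "sB (Lam a)" then show ?thesis
      apply (rule sB_LamE)
       apply assumption
      apply (erule sH_LamE)
      done
  qed
qed

lemma le'_App: "le' t (App c d) \<Longrightarrow> \<exists>a b. t = App a b \<and> le' a c \<and> le' b d"
  by (cases t) auto



lemma stable: "red N N' \<Longrightarrow> sA t \<Longrightarrow> le' t N \<Longrightarrow> le' t N'"
proof (induct arbitrary: t rule: red.induct)
  case (beta_v V M)
  from le'_App[OF beta_v(3)] obtain a b where t: "t = App a b" "le' a (Lam M)" "le' b V" by blast
  have False
    using sA_App[OF beta_v(2)[unfolded t(1)]]
  proof (elim disjE exE conjE)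
    fix x assume "a = Var x" then show False using t by simp
  next
    assume "sH a" then show False using sH_le[OF _ t(2)] by simp
  next
    fix A assume "sH b"
    from sH_le[OF this t(3)] obtain c d where "V = App c d" by blast
    then show False using beta_v(1) by simp
  qed
  then show ?case ..
next
  case (sigma1 M N P)
  from le'_App[OF sigma1(2)] obtain a b where t: "t = App a b" "le' a (App (Lam M) N)" by blast
  have False
    using sA_App[OF sigma1(1)[unfolded t(1)]]
  proof (elim disjE exE conjE)
    fix x assume "a = Var x" then show False using t by simp
  next
    assume "sH a" then show False using sH_le[OF _ t(2)] by simp
  next
    fix A assume "a = Lam A" then show False using t by simp
  qed
  then show ?case ..
next
  case (sigma3 V M N)
  from le'_App[OF sigma3(3)] obtain a b where t: "t = App a b" "le' a V" "le' b (App (Lam M) N)" by blast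
  have False
    using sA_App[OF sigma3(2)[unfolded t(1)]]
  proof (elim disjE exE conjE)
    fix x assume "a = Var x" "sB b"
    from sB_cases[OF this(2)] show False
    proof (elim disjE exE conjE)
      fix y assume "b = Var y" then show False using t(3) by simp
    next
      fix A assume "b = Lam A" then show False using t(3) by simp
    next
      assume "b = Bot" then show False using t(3) by simp
    next
      assume "sH b" then show False using sH_le[OF _ t(3)] by simp
    qed
  next
    assume "sH a"
    from sH_le[OF this t(2)] obtain c d where "V = App c d" by blast
    then show False using sigma3(1) by simp
  next
    fix A assume "sH b" then show False using sH_le[OF _ t(3)] by simp
  qed
  then show ?case ..
next
  case (ctx_lam M M')
  show ?case
  proof (cases t)
    case (Lam a)
    have "le' a M" using ctx_lam(4) Lam by simp
    moreover have "sA a" using ctx_lam(3) Lam by (simp add: sA_Lam)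
    ultimately have "le' a M'" using ctx_lam(2) by blast
    then show ?thesis using Lam by simp
  next
    case Bot then show ?thesis by simp
  next
    case (Var x) then show ?thesis using ctx_lam(4) by simp
  next
    case (App x y) then show ?thesis using ctx_lam(4) by simp
  qed
next
  case (ctx_appL M M' N)
  from le'_App[OF ctx_appL(4)] obtain a b where t: "t = App a b" "le' a M" "le' b N" by blast
  have "sA a" using sA_App_sub ctx_appL(3) t(1) by blast
  then have "le' a M'" using ctx_appL(2) t(2) by blast
  then show ?case using t by simp
next
  case (ctx_appR N N' M)
  from le'_App[OF ctx_appR(4)] obtain a b where t: "t = App a b" "le' a M" "le' b N" by blast
  have "sA b" using sA_App_sub ctx_appR(3) t(1) by blast
  then have "le' b N'" using ctx_appR(2) t(3) by blast
  then show ?case using t by simp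
qed

lemma stables: "reds N N' \<Longrightarrow> sA t \<Longrightarrow> le' t N \<Longrightarrow> le' t N'"
proof (induct rule: rtranclp_induct)
  case (step y z) then show ?case using stable by blast
qed simp

lemma bot_free_lift: "bot_free (lift k t) = bot_free t"
  by (induct t arbitrary: k) auto

lemma bot_free_subst: "bot_free t \<Longrightarrow> bot_free s \<Longrightarrow> bot_free (subst t k s)"
  by (induct t arbitrary: k s) (auto simp: bot_free_lift)

lemma red_bot_free: "red M N \<Longrightarrow> bot_free M \<Longrightarrow> bot_free N"
  by (induct rule: red.induct) (auto simp: bot_free_lift bot_free_subst)

lemma reds_bot_free: "reds M N \<Longrightarrow> bot_free M \<Longrightarrow> bot_free N"
proof (induct rule: rtranclp_induct)
  case (step y z) then show ?case using red_bot_free by blast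
qed simp

theorem lemma2p6:
  assumes "bot_free M" and "bot_free N" and "red M N"
  shows "approximants M = approximants N"
proof
  show "approximants N \<subseteq> approximants M"
  proof
    fix A assume "A \<in> approximants N"
    then obtain N' where A: "apxA A" "bot_free N'" "reds N N'" "approx_le A N'"
      unfolding approximants_def by blast
    have "reds M N'" using assms(3) A(3) by (rule converse_rtranclp_into_rtranclp)
    then show "A \<in> approximants M" unfolding approximants_def using A by blast
  qed
next
  show "approximants M \<subseteq> approximants N"
  proof
    fix A assume "A \<in> approximants M"
    then obtain N' where A: "apxA A" "bot_free N'" "reds M N'" "approx_le A N'"
      unfolding approximants_def by blast
    obtain d where d: "reds N d" "reds N' d" using red_confl[OF r_into_rtranclp[of red, OF assms(3)] A(3)] by blast
    have sA: "sA A" using apx_s A(1) by blast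
    have "le' A N'" using A(4) by (simp add: approx_le_iff)
    then have "le' A d" using stables[OF d(2) sA] by blast
    then have "approx_le A d" by (simp add: approx_le_iff)
    moreover have "bot_free d" using reds_bot_free[OF d(2) A(2)] .
    ultimately show "A \<in> approximants N"
      unfolding approximants_def using A(1) d(1) by blast
  qed
qed

end
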